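(* Assume that the basis of canonical cycles $(b_1,b_2,a_1,a_2)$ satisfying $a_1^{\mu}=a_2$, $b_1^{\mu}=b_2$ is transformed by a matrix $T\in \mathrm{Sp}(4,\mathbb{Z})$ to another basis $(b'_1,b'_2,a'_1,a'_2)$ satisfying the same relation: $a_1'^{\mu}=a_2'$, $b_1'^{\mu}=b_2'$. Then the action of the matrix $T$ on the matrix of $b$-periods $\mathbf{B}=\frac{1}{2}\begin{pmatrix}\mathbf{x}+\mathbf{y} & \mathbf{x}-\mathbf{y}\\ \mathbf{x}-\mathbf{y} & \mathbf{x}+\mathbf{y}\end{pmatrix}$ gives rise to an action of two elements $\gamma_1,\gamma_2\in\Gamma$, such that $\gamma_1\gamma_2^{-1}\in\Gamma(2)$, on $\mathbf{x}$ and $\mathbf{y}$, respectively. The matrix $T$ is expressed in terms of $\gamma_{1,2}$ as follows: if $\gamma_i=\begin{pmatrix} k_i & l_i\\ m_i & n_i\end{pmatrix}$, $i=1,2$, then $$T=\frac{1}{2}\begin{pmatrix} k_1+k_2 & k_1-k_2 & l_1+l_2 & l_1-l_2\\ k_1-k_2 & k_1+k_2 & l_1-l_2 & l_1+l_2\\ m_1+m_2 & m_1-m_2 & n_1+n_2 & n_1-n_2\\ m_1-m_2 & m_1+m_2 & n_1-n_2 & n_1+n_2\end{pmatrix}.$$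
   Context: Consider a genus two curve $y^2=(z^2-1)(z^2-r_1^2)(z^2-r_2^2)$, $r_1,r_2\in\mathbb{C}$, which besides the hyperelliptic involution admits the involution $\mu: z\mapsto -z$. A canonical basis of cycles $(b_1,b_2,a_1,a_2)$ is chosen so that $a_1^{\mu}=a_2$, $b_1^{\mu}=b_2$ (superscript $\mu$ denotes the image of a cycle under $\mu$); in such a basis the matrix of $b$-periods has the form $\mathbf{B}=\frac{1}{2}\begin{pmatrix}\mathbf{x}+\mathbf{y} & \mathbf{x}-\mathbf{y}\\ \mathbf{x}-\mathbf{y} & \mathbf{x}+\mathbf{y}\end{pmatrix}$ with $\mathbf{x},\mathbf{y}$ in the upper half-plane. A matrix $T=\begin{pmatrix}A&B\\C&D\end{pmatrix}\in\mathrm{Sp}(4,\mathbb{Z})$ acting on the vector $(b_1,b_2,a_1,a_2)^t$ acts on the matrix of $b$-periods by $\mathbf{B}\mapsto (A\mathbf{B}+B)(C\mathbf{B}+D)^{-1}$; elements of $\Gamma$ act on the upper half-plane by Möbius transformations. Here $\Gamma=SL(2,\mathbb{Z})$ and $\Gamma(2)$ is the principal congruence subgroup of $\Gamma$ consisting of matrices $\gamma\equiv I \pmod 2$. *)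

theory Defs
  imports "HOL-Analysis.Analysis"
begin

text \<open>Indices: type 4 = {0,1,2,3} indexes (b1,b2,a1,a2); type 2 = {0,1}.\<close>

definition hi4 :: "4 \<Rightarrow> bool" where
  "hi4 i \<longleftrightarrow> i = 2 \<or> i = 3"

definition lo4 :: "4 \<Rightarrow> 2" where
  "lo4 i = (if i = 0 \<or> i = 2 then 0 else 1)"

definition block4 :: "'a^2^2 \<Rightarrow> 'a^2^2 \<Rightarrow> 'a^2^2 \<Rightarrow> 'a^2^2 \<Rightarrow> 'a^4^4" where
  "block4 A B C D = (\<chi> i j. (if hi4 i then (if hi4 j then D else C)
                                   else (if hi4 j then B else A)) $ lo4 i $ lo4 j)"

definition blkA :: "'a^4^4 \<Rightarrow> 'a^2^2" where "blkA T = (\<chi> i j. T $ (if i = 0 then 0 else 1) $ (if j = 0 then 0 else 1))"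
definition blkB :: "'a^4^4 \<Rightarrow> 'a^2^2" where "blkB T = (\<chi> i j. T $ (if i = 0 then 0 else 1) $ (if j = 0 then 2 else 3))"
definition blkC :: "'a^4^4 \<Rightarrow> 'a^2^2" where "blkC T = (\<chi> i j. T $ (if i = 0 then 2 else 3) $ (if j = 0 then 0 else 1))"
definition blkD :: "'a^4^4 \<Rightarrow> 'a^2^2" where "blkD T = (\<chi> i j. T $ (if i = 0 then 2 else 3) $ (if j = 0 then 2 else 3))"

definition J4 :: "int^4^4" where
  "J4 = block4 0 (mat 1) (- mat 1) 0"

definition Sp4Z :: "(int^4^4) set" where
  "Sp4Z = {T. transpose T ** J4 ** T = J4}"

text \<open>The involution mu on cycles, in coordinates w.r.t. the basis (b1,b2,a1,a2):
  it swaps b1 <-> b2 and a1 <-> a2.\<close>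
definition sw4 :: "4 \<Rightarrow> 4" where
  "sw4 i = (if i = 0 then 1 else if i = 1 then 0 else if i = 2 then 3 else 2)"

definition mu_cyc :: "int^4 \<Rightarrow> int^4" where
  "mu_cyc v = (\<chi> i. v $ sw4 i)"

definition SL2Z :: "(int^2^2) set" where
  "SL2Z = {g. det g = 1}"

definition Gamma2 :: "(int^2^2) set" where
  "Gamma2 = {g. g \<in> SL2Z \<and> (\<forall>i j. even (g $ i $ j - mat 1 $ i $ j))}"

definition moeb :: "int^2^2 \<Rightarrow> complex \<Rightarrow> complex" where
  "moeb g z = (of_int (g$0$0) * z + of_int (g$0$1)) / (of_int (g$1$0) * z + of_int (g$1$1))"

definition cmat :: "int^'n^'m \<Rightarrow> complex^'n^'m" where
  "cmat M = (\<chi> i j. of_int (M $ i $ j))"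

definition Bmat :: "complex \<Rightarrow> complex \<Rightarrow> complex^2^2" where
  "Bmat x y = (\<chi> i j. (if i = j then x + y else x - y) / 2)"

definition sp_act :: "int^4^4 \<Rightarrow> complex^2^2 \<Rightarrow> complex^2^2" where
  "sp_act T P = (cmat (blkA T) ** P + cmat (blkB T)) ** matrix_inv (cmat (blkC T) ** P + cmat (blkD T))"

text \<open>Twice the matrix T in the statement (entries k1+k2, k1-k2, ...).\<close>
definition sym2 :: "int \<Rightarrow> int \<Rightarrow> int^2^2" where
  "sym2 u v = (\<chi> i j. if i = j then u + v else u - v)"

definition Tdouble :: "int^2^2 \<Rightarrow> int^2^2 \<Rightarrow> int^4^4" where
  "Tdouble g1 g2 = block4 (sym2 (g1$0$0) (g2$0$0)) (sym2 (g1$0$1) (g2$0$1))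
                          (sym2 (g1$1$0) (g2$1$0)) (sym2 (g1$1$1) (g2$1$1))"

end

theory Submission
  imports Defs
begin

lemma U2: "(UNIV::2 set) = {0,1}" using UNIV_2 by auto
lemma U4: "(UNIV::4 set) = {0,1,2,3}" using UNIV_4 by auto
lemma S2: "sum f (UNIV::2 set) = f 0 + f 1" unfolding U2 by simp
lemma S4: "sum f (UNIV::4 set) = f 0 + f 1 + f 2 + f 3" unfolding U4 by (simp add: ac_simps)
lemma F2: "(\<forall>i::2. P i) \<longleftrightarrow> P 0 \<and> P 1" by (metis U2 UNIV_I insertE singletonD)
lemma F4: "(\<forall>i::4. P i) \<longleftrightarrow> P 0 \<and> P 1 \<and> P 2 \<and> P 3" using U4 by (metis UNIV_I insertE singletonD)
lemma M2eq: "(A::'a^2^2) = B \<longleftrightarrow> A$0$0 = B$0$0 \<and> A$0$1 = B$0$1 \<and> A$1$0 = B$1$0 \<and> A$1$1 = B$1$1"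
  by (auto simp: vec_eq_iff F2)
lemma D2: "det (A::'a::comm_ring_1^2^2) = A$0$0 * A$1$1 - A$0$1 * A$1$0"
proof -
  have t: "(2::2) = 0" by simp
  show ?thesis using det_2[of A] unfolding t by simp
qed

definition mk2 :: "'a \<Rightarrow> 'a \<Rightarrow> 'a \<Rightarrow> 'a \<Rightarrow> 'a^2^2" where
  "mk2 k l m n = (\<chi> i j. if i = 0 then (if j = 0 then k else l) else (if j = 0 then m else n))"

lemma mk2_simps[simp]: "mk2 k l m n $ 0 $ 0 = k" "mk2 k l m n $ 0 $ 1 = l"
  "mk2 k l m n $ 1 $ 0 = m" "mk2 k l m n $ 1 $ 1 = n"
  by (simp_all add: mk2_def)

lemma inv_unique:
  fixes A B :: "'a::semiring_1^'n^'n"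
  assumes "A ** B = mat 1" "B ** A = mat 1"
  shows "matrix_inv A = B"
  unfolding matrix_inv_def
proof (rule some_equality)
  show "A ** B = mat 1 \<and> B ** A = mat 1" using assms by simp
next
  fix X assume X: "A ** X = mat 1 \<and> X ** A = mat 1"
  have "X = X ** (A ** B)" using assms by (simp add: matrix_mul_rid)
  also have "\<dots> = (X ** A) ** B" by (simp add: matrix_mul_assoc)
  also have "\<dots> = B" using X by (simp add: matrix_mul_lid)
  finally show "X = B" .
qed

lemma Bmat_mult: "Bmat p q ** Bmat r s = Bmat (p * r) (q * s)"
  by (simp add: M2eq matrix_matrix_mult_def S2 Bmat_def field_simps)

lemma Bmat_add: "Bmat p q + Bmat r s = Bmat (p+r) (q+s)"
  by (simp add: M2eq Bmat_def field_simps)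

lemma Bmat_one: "Bmat 1 1 = mat 1"
  by (simp add: M2eq Bmat_def mat_def)

theorem lemma1:
  fixes T :: "int^4^4"
  assumes "T \<in> Sp4Z"
    and "mu_cyc (T $ 0) = T $ 1"
    and "mu_cyc (T $ 2) = T $ 3"
  shows "\<exists>g1 g2. g1 \<in> SL2Z \<and> g2 \<in> SL2Z \<and> g1 ** matrix_inv g2 \<in> Gamma2
     \<and> (\<forall>i j. 2 * T $ i $ j = Tdouble g1 g2 $ i $ j)
     \<and> (\<forall>x y. Im x > 0 \<longrightarrow> Im y > 0 \<longrightarrow>
           invertible (cmat (blkC T) ** Bmat x y + cmat (blkD T))
         \<and> sp_act T (Bmat x y) = Bmat (moeb g1 x) (moeb g2 y))"
proof -
  define a where "a = T$0$0"
  define b where "b = T$0$1"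
  define c where "c = T$0$2"
  define d where "d = T$0$3"
  define e where "e = T$2$0"
  define f where "f = T$2$1"
  define g where "g = T$2$2"
  define h where "h = T$2$3"
  have r1: "T$1$0 = b" "T$1$1 = a" "T$1$2 = d" "T$1$3 = c"
    using assms(2) unfolding a_def b_def c_def d_def
    by (auto simp: vec_eq_iff mu_cyc_def sw4_def dest: spec[of _ 0] spec[of _ 1] spec[of _ 2] spec[of _ 3])
  have r3: "T$3$0 = f" "T$3$1 = e" "T$3$2 = h" "T$3$3 = g"
    using assms(3) unfolding e_def f_def g_def h_def
    by (auto simp: vec_eq_iff mu_cyc_def sw4_def dest: spec[of _ 0] spec[of _ 1] spec[of _ 2] spec[of _ 3])
  have sp: "transpose T ** J4 ** T = J4" using assms(1) by (simp add: Sp4Z_def)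
  have e02: "(transpose T ** J4 ** T)$0$2 = J4$0$2" using sp by simp
  have e12: "(transpose T ** J4 ** T)$1$2 = J4$1$2" using sp by simp
  have s1: "a*g - e*c + b*h - f*d = 1"
    using e02 r1 r3
    by (simp add: matrix_matrix_mult_def transpose_def S4 J4_def block4_def hi4_def lo4_def mat_def
        a_def b_def c_def d_def e_def f_def g_def h_def algebra_simps)
  have s2: "b*g - f*c + a*h - e*d = 0"
    using e12 r1 r3
    by (simp add: matrix_matrix_mult_def transpose_def S4 J4_def block4_def hi4_def lo4_def mat_def
        a_def b_def c_def d_def e_def f_def g_def h_def algebra_simps)
  define g1 where "g1 = mk2 (a+b) (c+d) (e+f) (g+h)"
  define g2 where "g2 = mk2 (a-b) (c-d) (e-f) (g-h)"
  have d1: "det g1 = 1" unfolding g1_def D2 using s1 s2 by (simp add: algebra_simps)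
  have d2: "det g2 = 1" unfolding g2_def D2 using s1 s2 by (simp add: algebra_simps)
  define g2i where "g2i = mk2 (g-h) (d-c) (f-e) (a-b)"
  have i2: "matrix_inv g2 = g2i"
    apply (rule inv_unique)
    using s1 s2 by (simp_all add: g2_def g2i_def M2eq matrix_matrix_mult_def S2 mat_def algebra_simps)
  have G2: "g1 ** matrix_inv g2 \<in> Gamma2"
  proof -
    have "det (g1 ** matrix_inv g2) = 1"
    proof -
      have "det g2i = 1" unfolding g2i_def D2 using s1 s2 by (simp add: algebra_simps)
      then show ?thesis using d1 i2 by (simp add: det_mul)
    qed
    moreover have "\<forall>i j. even ((g1 ** matrix_inv g2) $ i $ j - mat 1 $ i $ j)"
    proof (intro allI)
      fix i j
      have gg: "g2 ** g2i = mat 1"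
        using s1 s2 by (simp add: g2_def g2i_def M2eq matrix_matrix_mult_def S2 mat_def algebra_simps)
      have "(g1 ** g2i) $ i $ j - (g2 ** g2i) $ i $ j = 2 * (mk2 b d f h ** g2i) $ i $ j"
        unfolding g1_def g2_def matrix_matrix_mult_def S2
        by (simp add: algebra_simps mk2_def)
      then show "even ((g1 ** matrix_inv g2) $ i $ j - mat 1 $ i $ j)"
        unfolding i2 gg by (metis dvd_triv_left)
    qed
    ultimately show ?thesis by (simp add: Gamma2_def SL2Z_def)
  qed
  have TD: "\<forall>i j. 2 * T $ i $ j = Tdouble g1 g2 $ i $ j"
    unfolding F4 using r1 r3
    by (simp add: Tdouble_def block4_def hi4_def lo4_def sym2_def g1_def g2_def
        a_def b_def c_def d_def e_def f_def g_def h_def)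
  have cA: "cmat (blkA T) = Bmat (of_int (a+b)) (of_int (a-b))"
    using r1 by (simp add: M2eq cmat_def blkA_def Bmat_def a_def b_def field_simps)
  have cB: "cmat (blkB T) = Bmat (of_int (c+d)) (of_int (c-d))"
    using r1 by (simp add: M2eq cmat_def blkB_def Bmat_def c_def d_def field_simps)
  have cC: "cmat (blkC T) = Bmat (of_int (e+f)) (of_int (e-f))"
    using r3 by (simp add: M2eq cmat_def blkC_def Bmat_def e_def f_def field_simps)
  have cD: "cmat (blkD T) = Bmat (of_int (g+h)) (of_int (g-h))"
    using r3 by (simp add: M2eq cmat_def blkD_def Bmat_def g_def h_def field_simps)
  have nz: "of_int m * z + of_int n \<noteq> 0" if "Im z > 0" "m \<noteq> 0 \<or> n \<noteq> 0" for m n :: int and z :: complex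
  proof
    assume H: "of_int m * z + of_int n = 0"
    then have "Im (of_int m * z + of_int n) = 0" by simp
    then have "m = 0" using that(1) by simp
    then show False using H that(2) by simp
  qed
  have mn1: "e+f \<noteq> 0 \<or> g+h \<noteq> 0" using d1 unfolding g1_def D2 by auto
  have mn2: "e-f \<noteq> 0 \<or> g-h \<noteq> 0" using d2 unfolding g2_def D2 by auto
  have CX: "\<forall>x y. Im x > 0 \<longrightarrow> Im y > 0 \<longrightarrow>
           invertible (cmat (blkC T) ** Bmat x y + cmat (blkD T))
         \<and> sp_act T (Bmat x y) = Bmat (moeb g1 x) (moeb g2 y)"
  proof (intro allI impI)
    fix x y :: complex assume x: "Im x > 0" and y: "Im y > 0"
    define \<alpha> where "\<alpha> = of_int (e+f) * x + of_int (g+h)"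
    define \<beta> where "\<beta> = of_int (e-f) * y + of_int (g-h)"
    have a0: "\<alpha> \<noteq> 0" unfolding \<alpha>_def using nz[OF x mn1] .
    have b0: "\<beta> \<noteq> 0" unfolding \<beta>_def using nz[OF y mn2] .
    have M: "cmat (blkC T) ** Bmat x y + cmat (blkD T) = Bmat \<alpha> \<beta>"
      unfolding cC cD Bmat_mult Bmat_add \<alpha>_def \<beta>_def by simp
    have m1: "Bmat \<alpha> \<beta> ** Bmat (1/\<alpha>) (1/\<beta>) = mat 1"
      using a0 b0 by (simp add: Bmat_mult Bmat_one)
    have m2: "Bmat (1/\<alpha>) (1/\<beta>) ** Bmat \<alpha> \<beta> = mat 1"
      using a0 b0 by (simp add: Bmat_mult Bmat_one)
    have inv: "invertible (Bmat \<alpha> \<beta>)" using m1 m2 unfolding invertible_def by blast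
    have mi: "matrix_inv (Bmat \<alpha> \<beta>) = Bmat (1/\<alpha>) (1/\<beta>)" using inv_unique[OF m1 m2] .
    have "sp_act T (Bmat x y) = Bmat ((of_int (a+b) * x + of_int (c+d)) / \<alpha>) ((of_int (a-b) * y + of_int (c-d)) / \<beta>)"
      unfolding sp_act_def M mi cA cB Bmat_mult Bmat_add by simp
    also have "\<dots> = Bmat (moeb g1 x) (moeb g2 y)"
      unfolding moeb_def g1_def g2_def \<alpha>_def \<beta>_def by simp
    finally show "invertible (cmat (blkC T) ** Bmat x y + cmat (blkD T))
         \<and> sp_act T (Bmat x y) = Bmat (moeb g1 x) (moeb g2 y)" using M inv by simp
  qed
  show ?thesis
    apply (rule exI[of _ g1], rule exI[of _ g2])
    using d1 d2 G2 TD CX by (simp add: SL2Z_def)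
qed

end
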